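(* Let $S^0$ be an adequate transversal of a quasi-adequate semigroup $S$. If $x\in E(S)$ then $x^0\in E^0$. In particular, if $x\in I\cup\Lambda$ then $x^0\in E^0$.
   Context: For a semigroup $S$, $S^1$ is $S$ with an identity adjoined, $E(S)$ its idempotents, $\mathcal{L},\mathcal{R}$ Green's relations. $\mathcal{R}^\ast=\{(a,b):\forall x,y\in S^1,\ xa=ya\iff xb=yb\}$, $\mathcal{L}^\ast=\{(a,b):\forall x,y\in S^1,\ ax=ay\iff bx=by\}$. $S$ is abundant if each $\mathcal{R}^\ast$- and $\mathcal{L}^\ast$-class contains an idempotent; adequate if also idempotents commute (then $a^+$, $a^\ast$ are the unique idempotents $\mathcal{R}^\ast$-, resp. $\mathcal{L}^\ast$-related to $a$). Quasi-adequate: abundant with $E(S)$ a subsemigroup. An abundant subsemigroup $U$ of abundant $S$ is a $\ast$-subsemigroup if $\mathcal{L}^\ast(U)=\mathcal{L}^\ast(S)\cap(U\times U)$, $\mathcal{R}^\ast(U)=\mathcal{R}^\ast(S)\cap(U\times U)$. An adequate $\ast$-subsemigroup $S^0$ of abundant $S$ is an adequate transversal if each $x\in S$ has a unique $\overline{x}\in S^0$ and idempotents $e,f$ of $S$ (then unique, written $e_x,f_x$) with $x=e\overline{x}f$, $e\,\mathcal{L}\,\overline{x}^+$, $f\,\mathcal{R}\,\overline{x}^\ast$. $E^0=E(S^0)$, $I=\{e_x:x\in S\}$, $\Lambda=\{f_x:x\in S\}$. For a regular element $x$ of $S$, $x^0$ denotes the unique inverse of $x$ with $xx^0=e_x$ and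 $x^0x=f_x$ (it is the unique inverse of $x$ lying in $S^0$). *)

theory Defs
  imports Main
begin

text \<open>Elements of S^1 are represented as 'a option, None being the adjoined identity.\<close>

definition semigroup_on :: "'a::semigroup_mult set \<Rightarrow> bool" where
  "semigroup_on S \<longleftrightarrow> (\<forall>a\<in>S. \<forall>b\<in>S. a * b \<in> S)"

definition ones :: "'a set \<Rightarrow> 'a option set" where
  "ones S = Some ` S \<union> {None}"

fun lm1 :: "'a::semigroup_mult option \<Rightarrow> 'a \<Rightarrow> 'a" where
  "lm1 None a = a"
| "lm1 (Some x) a = x * a"

fun rm1 :: "'a::semigroup_mult \<Rightarrow> 'a option \<Rightarrow> 'a" where
  "rm1 a None = a"
| "rm1 a (Some x) = a * x"

definition idems :: "'a::semigroup_mult set \<Rightarrow> 'a set" where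
  "idems S = {e\<in>S. e * e = e}"

definition greenL :: "'a::semigroup_mult set \<Rightarrow> 'a \<Rightarrow> 'a \<Rightarrow> bool" where
  "greenL S a b \<longleftrightarrow> a \<in> S \<and> b \<in> S \<and>
     (\<exists>x\<in>ones S. a = lm1 x b) \<and> (\<exists>y\<in>ones S. b = lm1 y a)"

definition greenR :: "'a::semigroup_mult set \<Rightarrow> 'a \<Rightarrow> 'a \<Rightarrow> bool" where
  "greenR S a b \<longleftrightarrow> a \<in> S \<and> b \<in> S \<and>
     (\<exists>x\<in>ones S. a = rm1 b x) \<and> (\<exists>y\<in>ones S. b = rm1 a y)"

definition Rstar :: "'a::semigroup_mult set \<Rightarrow> 'a \<Rightarrow> 'a \<Rightarrow> bool" where
  "Rstar S a b \<longleftrightarrow> a \<in> S \<and> b \<in> S \<and>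
     (\<forall>x\<in>ones S. \<forall>y\<in>ones S. lm1 x a = lm1 y a \<longleftrightarrow> lm1 x b = lm1 y b)"

definition Lstar :: "'a::semigroup_mult set \<Rightarrow> 'a \<Rightarrow> 'a \<Rightarrow> bool" where
  "Lstar S a b \<longleftrightarrow> a \<in> S \<and> b \<in> S \<and>
     (\<forall>x\<in>ones S. \<forall>y\<in>ones S. rm1 a x = rm1 a y \<longleftrightarrow> rm1 b x = rm1 b y)"

definition abundant :: "'a::semigroup_mult set \<Rightarrow> bool" where
  "abundant S \<longleftrightarrow> semigroup_on S \<and>
     (\<forall>a\<in>S. \<exists>e\<in>idems S. Rstar S a e) \<and> (\<forall>a\<in>S. \<exists>e\<in>idems S. Lstar S a e)"

definition adequate :: "'a::semigroup_mult set \<Rightarrow> bool" where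
  "adequate S \<longleftrightarrow> abundant S \<and> (\<forall>e\<in>idems S. \<forall>f\<in>idems S. e * f = f * e)"

definition quasi_adequate :: "'a::semigroup_mult set \<Rightarrow> bool" where
  "quasi_adequate S \<longleftrightarrow> abundant S \<and> (\<forall>e\<in>idems S. \<forall>f\<in>idems S. e * f \<in> idems S)"

definition star_subsemigroup :: "'a::semigroup_mult set \<Rightarrow> 'a set \<Rightarrow> bool" where
  "star_subsemigroup U S \<longleftrightarrow> U \<subseteq> S \<and> abundant U \<and>
     (\<forall>a\<in>U. \<forall>b\<in>U. Lstar U a b \<longleftrightarrow> Lstar S a b) \<and>
     (\<forall>a\<in>U. \<forall>b\<in>U. Rstar U a b \<longleftrightarrow> Rstar S a b)"

definition plus_of :: "'a::semigroup_mult set \<Rightarrow> 'a \<Rightarrow> 'a" where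
  "plus_of U a = (THE e. e \<in> idems U \<and> Rstar U a e)"

definition star_of :: "'a::semigroup_mult set \<Rightarrow> 'a \<Rightarrow> 'a" where
  "star_of U a = (THE e. e \<in> idems U \<and> Lstar U a e)"

definition decomp :: "'a::semigroup_mult set \<Rightarrow> 'a set \<Rightarrow> 'a \<Rightarrow> 'a \<Rightarrow> 'a \<Rightarrow> 'a \<Rightarrow> bool" where
  "decomp S0 S x xb e f \<longleftrightarrow> xb \<in> S0 \<and> e \<in> idems S \<and> f \<in> idems S \<and>
     x = e * xb * f \<and> greenL S e (plus_of S0 xb) \<and> greenR S f (star_of S0 xb)"

definition adequate_transversal :: "'a::semigroup_mult set \<Rightarrow> 'a set \<Rightarrow> bool" where
  "adequate_transversal S0 S \<longleftrightarrow> adequate S0 \<and> star_subsemigroup S0 S \<and>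
     (\<forall>x\<in>S. (\<exists>xb e f. decomp S0 S x xb e f) \<and>
        (\<forall>xb e f xb' e' f'. decomp S0 S x xb e f \<longrightarrow> decomp S0 S x xb' e' f' \<longrightarrow> xb = xb'))"

definition e_of :: "'a::semigroup_mult set \<Rightarrow> 'a set \<Rightarrow> 'a \<Rightarrow> 'a" where
  "e_of S0 S x = (THE e. \<exists>xb f. decomp S0 S x xb e f)"

definition f_of :: "'a::semigroup_mult set \<Rightarrow> 'a set \<Rightarrow> 'a \<Rightarrow> 'a" where
  "f_of S0 S x = (THE f. \<exists>xb e. decomp S0 S x xb e f)"

definition I_set :: "'a::semigroup_mult set \<Rightarrow> 'a set \<Rightarrow> 'a set" where
  "I_set S0 S = {e_of S0 S x | x. x \<in> S}"

definition Lambda_set :: "'a::semigroup_mult set \<Rightarrow> 'a set \<Rightarrow> 'a set" where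
  "Lambda_set S0 S = {f_of S0 S x | x. x \<in> S}"

definition inverse_in :: "'a::semigroup_mult set \<Rightarrow> 'a \<Rightarrow> 'a \<Rightarrow> bool" where
  "inverse_in S x y \<longleftrightarrow> y \<in> S \<and> x * y * x = x \<and> y * x * y = y"

definition regular_in :: "'a::semigroup_mult set \<Rightarrow> 'a \<Rightarrow> bool" where
  "regular_in S x \<longleftrightarrow> x \<in> S \<and> (\<exists>y. inverse_in S x y)"

definition zero_of :: "'a::semigroup_mult set \<Rightarrow> 'a set \<Rightarrow> 'a \<Rightarrow> 'a" where
  "zero_of S0 S x = (THE y. inverse_in S x y \<and> x * y = e_of S0 S x \<and> y * x = f_of S0 S x)"

end

theory Submission
  imports Defs
begin

lemma lm1_assoc: "lm1 s (p * q) = lm1 s p * q"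
  by (cases s) (simp_all add: mult.assoc)

lemma rm1_assoc: "rm1 (p * q) s = p * rm1 q s"
  by (cases s) (simp_all add: mult.assoc)

lemma lm1_in: "semigroup_on S \<Longrightarrow> s \<in> ones S \<Longrightarrow> p \<in> S \<Longrightarrow> lm1 s p \<in> S"
  by (cases s) (auto simp: ones_def semigroup_on_def)

lemma rm1_in: "semigroup_on S \<Longrightarrow> s \<in> ones S \<Longrightarrow> p \<in> S \<Longrightarrow> rm1 p s \<in> S"
  by (cases s) (auto simp: ones_def semigroup_on_def)

lemma Some_ones: "p \<in> S \<Longrightarrow> Some p \<in> ones S"
  by (simp add: ones_def)

lemma None_ones: "None \<in> ones S"
  by (simp add: ones_def)

lemma Rstar_app: "Rstar S p q \<Longrightarrow> u \<in> ones S \<Longrightarrow> v \<in> ones S \<Longrightarrow> lm1 u p = lm1 v p \<Longrightarrow> lm1 u q = lm1 v q"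
  unfolding Rstar_def by blast
lemma Rstar_app2: "Rstar S p q \<Longrightarrow> u \<in> ones S \<Longrightarrow> v \<in> ones S \<Longrightarrow> lm1 u q = lm1 v q \<Longrightarrow> lm1 u p = lm1 v p"
  unfolding Rstar_def by blast
lemma Lstar_app: "Lstar S p q \<Longrightarrow> u \<in> ones S \<Longrightarrow> v \<in> ones S \<Longrightarrow> rm1 p u = rm1 p v \<Longrightarrow> rm1 q u = rm1 q v"
  unfolding Lstar_def by blast
lemma Lstar_app2: "Lstar S p q \<Longrightarrow> u \<in> ones S \<Longrightarrow> v \<in> ones S \<Longrightarrow> rm1 q u = rm1 q v \<Longrightarrow> rm1 p u = rm1 p v"
  unfolding Lstar_def by blast

lemma Rstar_tr: assumes "Rstar S x p" "Rstar S x q" shows "Rstar S p q"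
proof -
  have "lm1 u p = lm1 v p \<longleftrightarrow> lm1 u q = lm1 v q" if "u \<in> ones S" "v \<in> ones S" for u v
    using Rstar_app[OF assms(1) that] Rstar_app2[OF assms(1) that]
      Rstar_app[OF assms(2) that] Rstar_app2[OF assms(2) that] by argo
  moreover have "p \<in> S" "q \<in> S" using assms by (auto simp: Rstar_def)
  ultimately show ?thesis unfolding Rstar_def by simp
qed

lemma Lstar_tr: assumes "Lstar S x p" "Lstar S x q" shows "Lstar S p q"
proof -
  have "rm1 p u = rm1 p v \<longleftrightarrow> rm1 q u = rm1 q v" if "u \<in> ones S" "v \<in> ones S" for u v
    using Lstar_app[OF assms(1) that] Lstar_app2[OF assms(1) that]
      Lstar_app[OF assms(2) that] Lstar_app2[OF assms(2) that] by argo
  moreover have "p \<in> S" "q \<in> S" using assms by (auto simp: Lstar_def)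
  ultimately show ?thesis unfolding Lstar_def by simp
qed

lemma Rstar_idem:
  assumes "Rstar S p q" "p \<in> idems S" "q \<in> idems S"
  shows "p * q = q" "q * p = p"
proof -
  from assms have "p \<in> S" "q \<in> S" "p*p = p" "q*q=q" by (auto simp: idems_def Rstar_def)
  show "p * q = q" using Rstar_app[OF assms(1) Some_ones[OF \<open>p \<in> S\<close>] None_ones] \<open>p*p=p\<close> by simp
  show "q * p = p" using Rstar_app2[OF assms(1) Some_ones[OF \<open>q \<in> S\<close>] None_ones] \<open>q*q=q\<close> by simp
qed

lemma Lstar_idem:
  assumes "Lstar S p q" "p \<in> idems S" "q \<in> idems S"
  shows "q * p = q" "p * q = p"
proof -
  from assms have "p \<in> S" "q \<in> S" "p*p = p" "q*q=q" by (auto simp: idems_def Lstar_def)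
  show "q * p = q" using Lstar_app[OF assms(1) Some_ones[OF \<open>p \<in> S\<close>] None_ones] \<open>p*p=p\<close> by simp
  show "p * q = p" using Lstar_app2[OF assms(1) Some_ones[OF \<open>q \<in> S\<close>] None_ones] \<open>q*q=q\<close> by simp
qed

lemma greenL_idem:
  assumes "greenL S e a" "e * e = e" "a * a = a"
  shows "e * a = e" "a * e = a"
proof -
  from assms(1) obtain u v where u: "e = lm1 u a" and v: "a = lm1 v e" by (auto simp: greenL_def)
  have "e * a = lm1 u (a * a)" using u by (simp add: lm1_assoc)
  then show "e * a = e" using assms u by simp
  have "a * e = lm1 v (e * e)" using v by (simp add: lm1_assoc)
  then show "a * e = a" using assms v by simp
qed

lemma greenR_idem:
  assumes "greenR S f b" "f * f = f" "b * b = b"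
  shows "b * f = f" "f * b = b"
proof -
  from assms(1) obtain u v where u: "f = rm1 b u" and v: "b = rm1 f v" by (auto simp: greenR_def)
  have "b * f = rm1 (b * b) u" using u by (simp add: rm1_assoc)
  then show "b * f = f" using assms u by simp
  have "f * b = rm1 (f * f) v" using v by (simp add: rm1_assoc)
  then show "f * b = b" using assms v by simp
qed

lemma plus_star:
  assumes "adequate S0" "xb \<in> S0"
  shows "plus_of S0 xb \<in> idems S0 \<and> Rstar S0 xb (plus_of S0 xb)"
    "star_of S0 xb \<in> idems S0 \<and> Lstar S0 xb (star_of S0 xb)"
proof -
  have ab: "abundant S0" and comm: "\<forall>e\<in>idems S0. \<forall>f\<in>idems S0. e * f = f * e"
    using assms by (auto simp: adequate_def)
  obtain p where p: "p \<in> idems S0" "Rstar S0 xb p" using ab assms by (auto simp: abundant_def)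
  have "\<And>q. q \<in> idems S0 \<and> Rstar S0 xb q \<Longrightarrow> q = p"
  proof -
    fix q assume q: "q \<in> idems S0 \<and> Rstar S0 xb q"
    have "Rstar S0 p q" using Rstar_tr p q by blast
    from Rstar_idem[OF this p(1)] q have "p*q = q" "q*p = p" by auto
    with comm p q show "q = p" by auto
  qed
  note u = this
  have "plus_of S0 xb = p" unfolding plus_of_def
    by (rule the_equality) (use p u in blast)+
  then show "plus_of S0 xb \<in> idems S0 \<and> Rstar S0 xb (plus_of S0 xb)" using p by simp
  obtain p where p: "p \<in> idems S0" "Lstar S0 xb p" using ab assms by (auto simp: abundant_def)
  have "\<And>q. q \<in> idems S0 \<and> Lstar S0 xb q \<Longrightarrow> q = p"
  proof -
    fix q assume q: "q \<in> idems S0 \<and> Lstar S0 xb q"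
    have "Lstar S0 p q" using Lstar_tr p q by blast
    from Lstar_idem[OF this p(1)] q have "q*p = q" "p*q = p" by auto
    with comm p q show "q = p" by auto
  qed
  note u = this
  have "star_of S0 xb = p" unfolding star_of_def
    by (rule the_equality) (use p u in blast)+
  then show "star_of S0 xb \<in> idems S0 \<and> Lstar S0 xb (star_of S0 xb)" using p by simp
qed

locale trv =
  fixes S S0 :: "'a::semigroup_mult set"
  assumes qa: "quasi_adequate S" and tr: "adequate_transversal S0 S"
begin

lemma sg: "semigroup_on S" using qa by (simp add: quasi_adequate_def abundant_def)
lemma ad0: "adequate S0" using tr by (simp add: adequate_transversal_def)
lemma sub: "S0 \<subseteq> S" using tr by (simp add: adequate_transversal_def star_subsemigroup_def)
lemma comm0: "\<And>e f. e \<in> idems S0 \<Longrightarrow> f \<in> idems S0 \<Longrightarrow> e * f = f * e"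
  using ad0 by (auto simp: adequate_def)

lemma facts:
  assumes d: "decomp S0 S x xb e f"
  shows "xb \<in> S0" "e \<in> idems S" "f \<in> idems S" "x = e * xb * f"
    "plus_of S0 xb \<in> idems S0" "star_of S0 xb \<in> idems S0"
    "plus_of S0 xb * xb = xb" "xb * star_of S0 xb = xb"
    "e * plus_of S0 xb = e" "plus_of S0 xb * e = plus_of S0 xb"
    "star_of S0 xb * f = f" "f * star_of S0 xb = star_of S0 xb"
    "Rstar S xb (plus_of S0 xb)" "Lstar S xb (star_of S0 xb)"
proof -
  show xb: "xb \<in> S0" and e: "e \<in> idems S" and f: "f \<in> idems S" and "x = e * xb * f"
    using d by (auto simp: decomp_def)
  note ps = plus_star[OF ad0 xb]
  show "plus_of S0 xb \<in> idems S0" "star_of S0 xb \<in> idems S0" using ps by auto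
  have "Rstar S0 xb (plus_of S0 xb)" using ps by auto
  have pS: "plus_of S0 xb \<in> S0" "plus_of S0 xb * plus_of S0 xb = plus_of S0 xb"
    and sS: "star_of S0 xb \<in> S0" "star_of S0 xb * star_of S0 xb = star_of S0 xb"
    using ps by (auto simp: idems_def)
  show "plus_of S0 xb * xb = xb"
    using Rstar_app2[OF \<open>Rstar S0 xb (plus_of S0 xb)\<close> Some_ones[OF pS(1)] None_ones] pS by simp
  show "xb * star_of S0 xb = xb"
    using Lstar_app2[of S0 xb "star_of S0 xb", OF _ Some_ones[OF sS(1)] None_ones] ps sS by simp
  have gl: "greenL S e (plus_of S0 xb)" and gr: "greenR S f (star_of S0 xb)" using d by (auto simp: decomp_def)
  show "e * plus_of S0 xb = e" "plus_of S0 xb * e = plus_of S0 xb"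
    using greenL_idem[OF gl] e ps by (auto simp: idems_def)
  show "star_of S0 xb * f = f" "f * star_of S0 xb = star_of S0 xb"
    using greenR_idem[OF gr] f ps by (auto simp: idems_def)
  have ss: "star_subsemigroup S0 S" using tr by (simp add: adequate_transversal_def)
  have "plus_of S0 xb \<in> S0" "star_of S0 xb \<in> S0" using ps by (auto simp: idems_def)
  then show "Rstar S xb (plus_of S0 xb)" "Lstar S xb (star_of S0 xb)"
    using ss ps xb unfolding star_subsemigroup_def by blast+
qed

lemma R_x_e:
  assumes d: "decomp S0 S x xb e f" and xS: "x \<in> S"
  shows "Rstar S x e"
proof -
  note F = facts[OF d]
  have eS: "e \<in> S" using F(2) by (simp add: idems_def)
  have c: "u * xb * f * star_of S0 xb = u * xb" for u
    by (simp only: mult.assoc F(12) F(8))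
  have c2: "u * plus_of S0 xb = u" if "u = lm1 s e" for u s
    using that by (simp only: lm1_assoc[symmetric] F(9))
  have ex: "lm1 s x = lm1 s e * xb * f" for s by (simp only: F(4) lm1_assoc)
  have "lm1 s x = lm1 t x \<longleftrightarrow> lm1 s e = lm1 t e" if s: "s \<in> ones S" and t: "t \<in> ones S" for s t
  proof
    assume h: "lm1 s x = lm1 t x"
    hence "lm1 s e * xb * f = lm1 t e * xb * f" by (simp only: ex)
    hence "lm1 s e * xb * f * star_of S0 xb = lm1 t e * xb * f * star_of S0 xb" by (rule arg_cong)
    hence h2: "lm1 s e * xb = lm1 t e * xb" by (simp only: c)
    have i1: "lm1 s e \<in> S" and i2: "lm1 t e \<in> S" using lm1_in[OF sg] s t eS by auto
    have "lm1 (Some (lm1 s e)) (plus_of S0 xb) = lm1 (Some (lm1 t e)) (plus_of S0 xb)"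
      by (rule Rstar_app[OF F(13) Some_ones[OF i1] Some_ones[OF i2]]) (simp add: h2)
    hence "lm1 s e * plus_of S0 xb = lm1 t e * plus_of S0 xb" by simp
    thus "lm1 s e = lm1 t e" by (simp only: c2)
  next
    assume "lm1 s e = lm1 t e"
    thus "lm1 s x = lm1 t x" by (simp only: ex)
  qed
  thus ?thesis using xS eS by (simp add: Rstar_def)
qed

lemma L_x_f:
  assumes d: "decomp S0 S x xb e f" and xS: "x \<in> S"
  shows "Lstar S x f"
proof -
  note F = facts[OF d]
  have fS: "f \<in> S" using F(3) by (simp add: idems_def)
  have c: "plus_of S0 xb * (e * (xb * u)) = xb * u" for u
    by (simp only: mult.assoc[symmetric] F(10) F(7))
  have c2: "star_of S0 xb * u = u" if "u = rm1 f s" for u s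
    using that by (simp only: rm1_assoc[symmetric] F(11))
  have ex: "rm1 x s = e * (xb * rm1 f s)" for s by (simp only: F(4) rm1_assoc mult.assoc)
  have "rm1 x s = rm1 x t \<longleftrightarrow> rm1 f s = rm1 f t" if s: "s \<in> ones S" and t: "t \<in> ones S" for s t
  proof
    assume h: "rm1 x s = rm1 x t"
    hence "e * (xb * rm1 f s) = e * (xb * rm1 f t)" by (simp only: ex)
    hence "plus_of S0 xb * (e * (xb * rm1 f s)) = plus_of S0 xb * (e * (xb * rm1 f t))" by (rule arg_cong)
    hence h2: "xb * rm1 f s = xb * rm1 f t" by (simp only: c)
    have i1: "rm1 f s \<in> S" and i2: "rm1 f t \<in> S" using rm1_in[OF sg] s t fS by auto
    have "rm1 (star_of S0 xb) (Some (rm1 f s)) = rm1 (star_of S0 xb) (Some (rm1 f t))"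
      by (rule Lstar_app[OF F(14) Some_ones[OF i1] Some_ones[OF i2]]) (simp add: h2)
    hence "star_of S0 xb * rm1 f s = star_of S0 xb * rm1 f t" by simp
    thus "rm1 f s = rm1 f t" by (simp only: c2)
  next
    assume "rm1 f s = rm1 f t"
    thus "rm1 x s = rm1 x t" by (simp only: ex)
  qed
  thus ?thesis using xS fS by (simp add: Lstar_def)
qed

lemma uniq:
  assumes xS: "x \<in> S" and d: "decomp S0 S x xb e f" and d': "decomp S0 S x xb' e' f'"
  shows "e = e'" "f = f'"
proof -
  have A: "\<forall>x\<in>S. (\<exists>xb e f. decomp S0 S x xb e f) \<and>
        (\<forall>xb e f xb' e' f'. decomp S0 S x xb e f \<longrightarrow> decomp S0 S x xb' e' f' \<longrightarrow> xb = xb')"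
    using tr unfolding adequate_transversal_def by (elim conjE)
  have "xb = xb'" using conjunct2[OF bspec[OF A xS]] d d' by blast
  note F = facts[OF d] and F' = facts[OF d'[folded \<open>xb = xb'\<close>]]
  have "Rstar S e e'" using Rstar_tr[OF R_x_e[OF d xS] R_x_e[OF d' xS]] .
  from Rstar_idem[OF this F(2) F'(2)] have "e * e' = e'" by simp
  moreover have "e * e' = e"
  proof -
    have "e * e' = (e * plus_of S0 xb) * e'" using F(9) by simp
    also have "... = e * (plus_of S0 xb * e')" by (simp only: mult.assoc)
    finally show ?thesis using F(9) F'(10) by simp
  qed
  ultimately show "e = e'" by simp
  have "Lstar S f f'" using Lstar_tr[OF L_x_f[OF d xS] L_x_f[OF d' xS]] .
  from Lstar_idem[OF this F(3) F'(3)] have "f' * f = f'" by simp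
  moreover have "f' * f = f"
  proof -
    have "f' * f = f' * (star_of S0 xb * f)" using F(11) by simp
    also have "... = (f' * star_of S0 xb) * f" by (simp only: mult.assoc)
    finally show ?thesis using F(11) F'(12) by simp
  qed
  ultimately show "f = f'" by simp
qed

lemma eof:
  assumes xS: "x \<in> S" and d: "decomp S0 S x xb e f"
  shows "e_of S0 S x = e" "f_of S0 S x = f"
proof -
  show "e_of S0 S x = e" unfolding e_of_def
  proof (rule the_equality)
    show "\<exists>xb f. decomp S0 S x xb e f" using d by blast
  next
    fix e' assume "\<exists>xb f. decomp S0 S x xb e' f"
    then obtain xb' f' where "decomp S0 S x xb' e' f'" by blast
    from uniq(1)[OF xS d this] show "e' = e" by simp
  qed
  show "f_of S0 S x = f" unfolding f_of_def
  proof (rule the_equality)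
    show "\<exists>xb e. decomp S0 S x xb e f" using d by blast
  next
    fix f' assume "\<exists>xb e. decomp S0 S x xb e f'"
    then obtain xb' e' where "decomp S0 S x xb' e' f'" by blast
    from uniq(2)[OF xS d this] show "f' = f" by simp
  qed
qed

lemma main:
  assumes x: "x \<in> idems S"
  shows "zero_of S0 S x \<in> idems S0"
proof -
  have xS: "x \<in> S" and xx: "x * x = x" using x by (auto simp: idems_def)
  obtain xb e f where d: "decomp S0 S x xb e f" using tr xS by (auto simp: adequate_transversal_def)
  note F = facts[OF d]
  define a where "a = plus_of S0 xb"
  define b where "b = star_of S0 xb"
  have ee: "e * e = e" and ff: "f * f = f" using F by (auto simp: idems_def)
  have xe: "x * e = e"
    using Rstar_app[OF R_x_e[OF d xS] Some_ones[OF xS] None_ones] xx by simp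
  have fx: "f * x = f"
    using Lstar_app[OF L_x_f[OF d xS] Some_ones[OF xS] None_ones] xx by simp
  define w where "w = f * e"
  have xw: "x * w = e"
  proof -
    have "x * w = e * xb * (f * f) * e" using F(4) by (simp add: w_def mult.assoc)
    also have "... = x * e" using ff F(4) by simp
    finally show ?thesis using xe by simp
  qed
  have wx: "w * x = f"
  proof -
    have "w * x = f * (e * e) * xb * f" using F(4) by (simp add: w_def mult.assoc)
    also have "... = f * x" using ee F(4) by (simp add: mult.assoc)
    finally show ?thesis using fx by simp
  qed
  have xwx: "x * w * x = x"
  proof -
    have "x * w * x = (e * e) * xb * f" using xw F(4) by (simp add: mult.assoc)
    thus ?thesis using ee F(4) by simp
  qed
  have wxw: "w * x * w = w"
  proof -
    have "w * x * w = (f * f) * e" using wx by (simp add: w_def mult.assoc)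
    thus ?thesis using ff by (simp add: w_def)
  qed
  have wS: "w \<in> S" using F(2,3) sg by (auto simp: w_def idems_def semigroup_on_def)
  have z: "zero_of S0 S x = w"
    unfolding zero_of_def eof[OF xS d]
  proof (rule the_equality)
    show "inverse_in S x w \<and> x * w = e \<and> w * x = f" using xwx wxw wS xw wx by (simp add: inverse_in_def)
  next
    fix y assume "inverse_in S x y \<and> x * y = e \<and> y * x = f"
    hence h1: "y * x * y = y" and h2: "x * y = x * w" and h3: "y * x = w * x" using xw wx by (auto simp: inverse_in_def)
    have "y = y * (x * y)" using h1 by (simp add: mult.assoc)
    also have "... = y * (x * w)" using h2 by simp
    finally have "y = y * (x * w)" .
    also have "... = (w * x) * w" using h3 by (simp add: mult.assoc[symmetric])
    finally show "y = w" using wxw by simp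
  qed
  have A: "a * e = a" "a * xb = xb" "e * a = e" using F by (simp_all add: a_def)
  have B: "f * b = b" "xb * b = xb" "b * f = f" using F by (simp_all add: b_def)
  have ax: "a * x = xb * f" using A F(4) by (simp add: mult.assoc[symmetric])
  have xb': "x * b = e * xb" using B F(4) by (simp add: mult.assoc)
  have xbw: "xb * w * xb = xb"
  proof -
    have "a * x * (x * b) = a * (x * x) * b" by (simp only: mult.assoc)
    hence "a * x * (x * b) = a * x * b" using xx by simp
    moreover have "a * x * (x * b) = xb * w * xb" using ax xb' by (simp add: w_def mult.assoc)
    moreover have "a * x * b = xb" using ax B by (simp add: mult.assoc)
    ultimately show ?thesis by simp
  qed
  have ea: "a = xb * w"
  proof -
    have "a = a * (x * e)" using xe A by simp
    also have "... = xb * w" using ax by (simp add: w_def mult.assoc[symmetric])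
    finally show ?thesis .
  qed
  have eb: "b = w * xb"
  proof -
    have "b = (f * x) * b" using fx B by simp
    also have "... = w * xb" using xb' by (simp add: w_def mult.assoc)
    finally show ?thesis .
  qed
  have ww: "w * w = w"
    using qa F(2,3) unfolding quasi_adequate_def w_def by (simp add: idems_def)
  have xbab: "a * b = xb"
  proof -
    have "a * b = xb * (w * w) * xb" using ea eb by (simp add: mult.assoc)
    thus ?thesis using ww xbw by simp
  qed
  have ai: "a \<in> idems S0" and bi: "b \<in> idems S0" using F(5,6) unfolding a_def b_def by simp_all
  have ab: "a * b = b * a" using comm0[OF ai bi] .
  have aa: "a * a = a" and bb: "b * b = b" using ai bi by (auto simp: idems_def)
  have xbxb: "xb * xb = xb"
  proof -
    have "a * (b * a) * b = (a * b) * (a * b)" by (simp only: mult.assoc)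
    hence "xb * xb = a * (b * a) * b" by (simp only: xbab)
    also have "... = a * (a * b) * b" by (simp only: ab[symmetric])
    also have "... = (a * a) * (b * b)" by (simp only: mult.assoc)
    finally show ?thesis by (simp only: aa bb xbab)
  qed
  have bw: "b * w = w" unfolding w_def by (simp only: mult.assoc[symmetric] B(3))
  have wxbw: "w * xb * w = w"
  proof -
    have "w * xb * w = b * w" by (simp only: eb)
    thus ?thesis by (simp only: bw)
  qed
  have "(w * xb) * (xb * w) = w * (xb * xb) * w" by (simp only: mult.assoc)
  hence "w = (w * xb) * (xb * w)" by (simp only: xbxb wxbw)
  also have "... = b * a" by (simp only: ea eb)
  also have "... = xb" by (simp only: ab[symmetric] xbab)
  finally have "w = xb" .
  hence "zero_of S0 S x = xb" by (simp only: z)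
  thus ?thesis using F(1) xbxb by (simp add: idems_def)
qed

lemma second:
  assumes "x \<in> I_set S0 S \<union> Lambda_set S0 S"
  shows "x \<in> idems S"
proof -
  obtain y where yS: "y \<in> S" and "x = e_of S0 S y \<or> x = f_of S0 S y"
    using assms by (auto simp: I_set_def Lambda_set_def)
  moreover obtain yb e f where d: "decomp S0 S y yb e f" using tr yS by (auto simp: adequate_transversal_def)
  ultimately show ?thesis using eof[OF yS d] facts[OF d] by auto
qed

end

theorem corollary2p2:
  fixes S S0 :: "'a::semigroup_mult set"
  assumes "quasi_adequate S"
    and "adequate_transversal S0 S"
  shows "(\<forall>x\<in>idems S. zero_of S0 S x \<in> idems S0) \<and>
         (\<forall>x\<in>I_set S0 S \<union> Lambda_set S0 S. zero_of S0 S x \<in> idems S0)"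
proof -
  interpret trv S S0 using assms by unfold_locales
  show ?thesis using main second by blast
qed

end
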